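(* Let $G$ be a graph. (1) If $n\geq 3$, then no two distinct vertices of $\uparrow^{n}G$ are strongly cospectral (with respect to the Laplacian). (2) Let $n=2$ and let $u$ be a vertex of $G$ with degree $d_u$. Then the vertices $(0,u)$ and $(1,u)$ are strongly cospectral in $\uparrow^{2}G$ if and only if $d_u\notin\sigma_u(G)$, in which case $$\sigma_{(0,u),(1,u)}^+(\uparrow^{2}G)=2\cdot \sigma_{u}(G)\quad \text{and}\quad \sigma_{(0,u),(1,u)}^-(\uparrow^{2}G)=\{2d_u\}.$$ Moreover, in $\uparrow^{2}G$ the vertex $(0,u)$ can be strongly cospectral only with $(1,u)$.
   Context: All graphs are simple, undirected and unweighted; $L=D-A$ is the Laplacian matrix of a graph, $d_u$ the degree of $u$. For a graph $X$, $\sigma(X)$ is the set of distinct Laplacian eigenvalues, $L(X)=\sum_{\lambda\in\sigma(X)}\lambda E_\lambda$ the spectral decomposition with orthogonal eigenprojections $E_\lambda$, and $\sigma_u(X)=\{\lambda\in\sigma(X):E_\lambda\mathbf{e}_u\neq\mathbf{0}\}$ is the eigenvalue support of vertex $u$. Two vertices $u,v$ of $X$ are strongly cospectral if $E_\lambda\mathbf{e}_u=\pm E_\lambda\mathbf{e}_v$ for every $\lambda\in\sigma_u(X)$; in that case $\sigma^+_{u,v}(X)=\{\lambda:E_\lambda\mathbf{e}_u=E_\lambda\mathbf{e}_v\neq\mathbf{0}\}$ and $\sigma^-_{u,v}(X)=\{\lambda:E_\lambda\mathbf{e}_u=-E_\lambda\mathbf{e}_v\neq\mathbf{0}\}$.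 For a set $S$, $2\cdot S=\{2s:s\in S\}$. The blow-up $\uparrow^{n}G$ has vertex set $\mathbb{Z}_n\times V(G)$, with $(l,u)\sim(m,v)$ iff $u\sim v$ in $G$. *)

theory Defs
  imports "HOL-Analysis.Analysis"
begin

definition simple_graph :: "('a \<Rightarrow> 'a \<Rightarrow> bool) \<Rightarrow> bool" where
  "simple_graph adj \<longleftrightarrow> (\<forall>u v. adj u v = adj v u) \<and> (\<forall>u. \<not> adj u u)"

definition degree :: "('a::finite \<Rightarrow> 'a \<Rightarrow> bool) \<Rightarrow> 'a \<Rightarrow> nat" where
  "degree adj u = card {v. adj u v}"

definition laplacian :: "('a::finite \<Rightarrow> 'a \<Rightarrow> bool) \<Rightarrow> real^'a^'a" where
  "laplacian adj = (\<chi> i j. (if i = j then real (degree adj i) else 0)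
                           - (if adj i j then 1 else 0))"

definition blowup :: "('a \<Rightarrow> 'a \<Rightarrow> bool) \<Rightarrow> ('n \<times> 'a) \<Rightarrow> ('n \<times> 'a) \<Rightarrow> bool" where
  "blowup adj x y = adj (snd x) (snd y)"

definition mat_eigenvalues :: "real^'n^'n \<Rightarrow> real set" where
  "mat_eigenvalues M = {lam. \<exists>v. v \<noteq> 0 \<and> M *v v = lam *\<^sub>R v}"

definition eigenspace :: "real^'n^'n \<Rightarrow> real \<Rightarrow> (real^'n) set" where
  "eigenspace M lam = {v. M *v v = lam *\<^sub>R v}"

definition eproj :: "real^'n^'n \<Rightarrow> real \<Rightarrow> real^'n \<Rightarrow> real^'n" where
  "eproj M lam x = (THE p. p \<in> eigenspace M lam \<and> (\<forall>w\<in>eigenspace M lam. (x - p) \<bullet> w = 0))"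

definition evec :: "'n::finite \<Rightarrow> real^'n" where
  "evec u = axis u 1"

definition eig_support :: "real^'n^'n \<Rightarrow> 'n::finite \<Rightarrow> real set" where
  "eig_support M u = {lam \<in> mat_eigenvalues M. eproj M lam (evec u) \<noteq> 0}"

definition strongly_cospectral :: "real^'n^'n \<Rightarrow> 'n::finite \<Rightarrow> 'n \<Rightarrow> bool" where
  "strongly_cospectral M u v \<longleftrightarrow>
     (\<forall>lam\<in>eig_support M u. eproj M lam (evec u) = eproj M lam (evec v)
                          \<or> eproj M lam (evec u) = - eproj M lam (evec v))"

definition sigma_plus :: "real^'n^'n \<Rightarrow> 'n::finite \<Rightarrow> 'n \<Rightarrow> real set" where
  "sigma_plus M u v = {lam \<in> mat_eigenvalues M.
      eproj M lam (evec u) = eproj M lam (evec v) \<and> eproj M lam (evec u) \<noteq> 0}"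

definition sigma_minus :: "real^'n^'n \<Rightarrow> 'n::finite \<Rightarrow> 'n \<Rightarrow> real set" where
  "sigma_minus M u v = {lam \<in> mat_eigenvalues M.
      eproj M lam (evec u) = - eproj M lam (evec v) \<and> eproj M lam (evec u) \<noteq> 0}"

end

theory Submission
  imports Defs
begin

lemma eigenspace_subspace: "subspace (eigenspace M lam)"
  unfolding subspace_def eigenspace_def
  by (auto simp: matrix_vector_right_distrib matrix_vector_mult_scaleR algebra_simps)

lemma eproj_unique:
  assumes "p \<in> eigenspace M lam" "\<And>w. w \<in> eigenspace M lam \<Longrightarrow> (x - p) \<bullet> w = 0"
  shows "eproj M lam x = p"
  unfolding eproj_def
proof (rule the_equality)
  show "p \<in> eigenspace M lam \<and> (\<forall>w\<in>eigenspace M lam. (x - p) \<bullet> w = 0)" using assms by auto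
next
  fix q assume q: "q \<in> eigenspace M lam \<and> (\<forall>w\<in>eigenspace M lam. (x - q) \<bullet> w = 0)"
  have "q - p \<in> eigenspace M lam" using q assms(1) eigenspace_subspace subspace_diff by blast
  hence "(x - q) \<bullet> (q - p) = 0" "(x - p) \<bullet> (q - p) = 0" using q assms(2) by auto
  hence "(q - p) \<bullet> (q - p) = 0" by (simp add: inner_diff_left)
  thus "q = p" by simp
qed

lemma eproj_props:
  "eproj M lam x \<in> eigenspace M lam \<and> (\<forall>w\<in>eigenspace M lam. (x - eproj M lam x) \<bullet> w = 0)"
proof -
  obtain y z where y: "y \<in> span (eigenspace M lam)" and z: "\<And>w. w \<in> span (eigenspace M lam) \<Longrightarrow> orthogonal z w"
    and xyz: "x = y + z" using orthogonal_subspace_decomp_exists by blast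
  have sp: "span (eigenspace M lam) = eigenspace M lam" using eigenspace_subspace span_eq_iff by blast
  have "eproj M lam x = y"
    by (rule eproj_unique) (use y z xyz sp in \<open>auto simp: orthogonal_def\<close>)
  thus ?thesis using y z xyz sp by (auto simp: orthogonal_def)
qed

lemma eproj_nonzero_eig: "eproj M lam x \<noteq> 0 \<Longrightarrow> lam \<in> mat_eigenvalues M"
  using eproj_props[of M lam x] unfolding mat_eigenvalues_def eigenspace_def by blast

lemma eig_support_alt: "eig_support M u = {lam. eproj M lam (evec u) \<noteq> 0}"
  unfolding eig_support_def using eproj_nonzero_eig by blast

lemma sigma_plus_alt: "sigma_plus M u v = {lam. eproj M lam (evec u) = eproj M lam (evec v) \<and> eproj M lam (evec u) \<noteq> 0}"
  unfolding sigma_plus_def using eproj_nonzero_eig by blast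

lemma sigma_minus_alt: "sigma_minus M u v = {lam. eproj M lam (evec u) = - eproj M lam (evec v) \<and> eproj M lam (evec u) \<noteq> 0}"
  unfolding sigma_minus_def using eproj_nonzero_eig by blast

lemma sum_prod_UNIV: "(\<Sum>i\<in>(UNIV::('n::finite \<times> 'a::finite) set). f i) = (\<Sum>k\<in>UNIV. \<Sum>v\<in>UNIV. f (k,v))"
  by (simp add: sum.cartesian_product)

lemma degree_blowup: "degree (blowup adj :: ('n::finite \<times> 'a::finite) \<Rightarrow> _) (k,v) = CARD('n) * degree adj v"
proof -
  have "{y :: 'n \<times> 'a. blowup adj (k,v) y} = UNIV \<times> {w. adj v w}" by (auto simp: blowup_def)
  thus ?thesis by (simp add: degree_def card_cartesian_product)
qed

lemma lap_mult: "(laplacian adj *v a) $ v = real (degree adj v) * a $ v - (\<Sum>w\<in>UNIV. (if adj v w then 1 else 0) * a $ w)"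
  by (simp add: laplacian_def matrix_vector_mult_def left_diff_distrib sum_subtractf if_distrib[of "\<lambda>x. x * _"] sum.delta cong: if_cong)

lemma blap_mult:
  fixes w :: "real^('n::finite \<times> 'a::finite)"
  shows "(laplacian (blowup adj) *v w) $ (k,v) = real CARD('n) * real (degree adj v) * w $ (k,v)
     - (\<Sum>v'\<in>UNIV. (if adj v v' then 1 else 0) * (\<Sum>m\<in>UNIV. w $ (m,v')))"
proof -
  have "(laplacian (blowup adj) *v w) $ (k,v) = (\<Sum>i\<in>UNIV. laplacian (blowup adj) $ (k,v) $ i * w $ i)"
    by (simp add: matrix_vector_mult_def)
  also have "\<dots> = (\<Sum>i\<in>UNIV. (if i = (k,v) then real CARD('n) * real (degree adj v) * w $ (k,v) else 0)
        - (if adj v (snd i) then 1 else 0) * w $ i)"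
    by (rule sum.cong) (auto simp: laplacian_def degree_blowup blowup_def left_diff_distrib)
  also have "\<dots> = real CARD('n) * real (degree adj v) * w $ (k,v) - (\<Sum>i\<in>UNIV. (if adj v (snd i) then 1 else 0) * w $ i)"
    by (simp add: sum_subtractf)
  also have "(\<Sum>i\<in>UNIV. (if adj v (snd i) then 1 else 0) * w $ i) = (\<Sum>m\<in>UNIV. \<Sum>v'\<in>UNIV. (if adj v v' then 1 else 0) * w $ (m,v'))"
    by (simp add: sum_prod_UNIV)
  also have "\<dots> = (\<Sum>v'\<in>UNIV. (if adj v v' then 1 else 0) * (\<Sum>m\<in>UNIV. w $ (m,v')))"
    by (subst sum.swap) (simp add: sum_distrib_left)
  finally show ?thesis .
qed

lemma eproj_blowup:
  fixes l :: "'n::finite" and u :: "'a::finite" and adj :: "'a \<Rightarrow> 'a \<Rightarrow> bool" and lam :: real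
  defines "N \<equiv> real CARD('n)"
  defines "a \<equiv> eproj (laplacian adj) (lam / N) (evec u)"
  defines "c \<equiv> (N * real (degree adj u) = lam)"
  shows "eproj (laplacian (blowup adj)) lam (evec (l,u)) =
    (\<chi> i. a $ snd i / N + (if c \<and> snd i = u then (if fst i = l then 1 else 0) - 1 / N else 0))"
    (is "_ = ?p")
proof (rule eproj_unique)
  have Npos: "N > 0" unfolding N_def by simp
  have aeig: "laplacian adj *v a = (lam / N) *\<^sub>R a"
    using eproj_props[of "laplacian adj" "lam / N" "evec u"] unfolding a_def eigenspace_def by blast
  have aorth: "\<And>S. laplacian adj *v S = (lam / N) *\<^sub>R S \<Longrightarrow> (evec u - a) \<bullet> S = 0"
    using eproj_props[of "laplacian adj" "lam / N" "evec u"] unfolding a_def eigenspace_def by blast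
  have psum: "(\<Sum>m\<in>UNIV. ?p $ (m,v')) = a $ v'" for v'
  proof -
    have "(\<Sum>m\<in>UNIV. ?p $ (m,v')) = (\<Sum>m::'n\<in>UNIV. a $ v' / N) + (if c \<and> v' = u then (\<Sum>m::'n\<in>UNIV. (if m = l then 1 else 0) - 1 / N) else 0)"
      by (cases "c \<and> v' = u") (auto simp: sum.distrib)
    also have "\<dots> = a $ v'"
      using Npos by (simp add: sum_subtractf N_def)
    finally show ?thesis .
  qed
  show "?p \<in> eigenspace (laplacian (blowup adj)) lam"
    unfolding eigenspace_def
  proof (simp, subst vec_eq_iff, clarify)
    fix k v
    have av: "real (degree adj v) * a $ v - (\<Sum>w\<in>UNIV. (if adj v w then 1 else 0) * a $ w) = lam / N * a $ v"
      using arg_cong[OF aeig, of "\<lambda>x. x $ v"] by (simp add: lap_mult)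
    have "(laplacian (blowup adj) *v ?p) $ (k,v) = N * real (degree adj v) * ?p $ (k,v)
        - (\<Sum>v'\<in>UNIV. (if adj v v' then 1 else 0) * a $ v')"
      unfolding blap_mult N_def[symmetric] psum by (rule refl)
    also have "\<dots> = lam * ?p $ (k,v)"
      using av Npos unfolding c_def by (auto simp: field_simps)
    finally show "(laplacian (blowup adj) *v ?p) $ (k,v) = (lam *\<^sub>R ?p) $ (k,v)" by simp
  qed
next
  fix w :: "real^('n \<times> 'a)" assume "w \<in> eigenspace (laplacian (blowup adj)) lam"
  hence weig: "\<And>k v. (laplacian (blowup adj) *v w) $ (k,v) = lam * w $ (k,v)"
    unfolding eigenspace_def by simp
  have aorth: "\<And>S. laplacian adj *v S = (lam / N) *\<^sub>R S \<Longrightarrow> (evec u - a) \<bullet> S = 0"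
    using eproj_props[of "laplacian adj" "lam / N" "evec u"] unfolding a_def eigenspace_def by blast
  define S where "S = (\<chi> v. \<Sum>m\<in>UNIV. w $ (m,v))"
  define X where "X = (\<lambda>v. (\<Sum>v'\<in>UNIV. (if adj v v' then 1 else 0) * S $ v'))"
  have we: "N * real (degree adj v) * w $ (k,v) - X v = lam * w $ (k,v)" for k v
    using weig[of k v] unfolding blap_mult X_def S_def N_def by simp
  have Npos: "N > 0" unfolding N_def by simp
  have "laplacian adj *v S = (lam / N) *\<^sub>R S"
  proof (subst vec_eq_iff, clarify)
    fix v
    have "(\<Sum>k\<in>UNIV. N * real (degree adj v) * w $ (k,v) - X v) = (\<Sum>k\<in>UNIV. lam * w $ (k,v))"
      using we by simp
    hence "N * real (degree adj v) * S $ v - N * X v = lam * S $ v"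
      by (simp add: sum_subtractf sum_distrib_left S_def N_def)
    hence "real (degree adj v) * S $ v - X v = lam / N * S $ v"
      using Npos by (simp add: field_simps)
    thus "(laplacian adj *v S) $ v = ((lam / N) *\<^sub>R S) $ v"
      by (simp add: lap_mult X_def)
  qed
  hence "(evec u - a) \<bullet> S = 0" by (rule aorth)
  hence Su: "S $ u = (\<Sum>v\<in>UNIV. a $ v * S $ v)"
  proof -
    assume h: "(evec u - a) \<bullet> S = 0"
    have "evec u \<bullet> S = S $ u" by (simp add: evec_def inner_vec_def axis_def if_distrib[of "\<lambda>x. x * _"] cong: if_cong)
    moreover have "a \<bullet> S = (\<Sum>v\<in>UNIV. a $ v * S $ v)" by (simp add: inner_vec_def)
    ultimately show ?thesis using h by (simp add: inner_diff_left)
  qed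
  have nc: "\<not> c \<Longrightarrow> S $ u = N * w $ (l,u)"
  proof -
    assume "\<not> c"
    hence "N * real (degree adj u) - lam \<noteq> 0" unfolding c_def by simp
    have "w $ (k,u) = w $ (l,u)" for k
    proof -
      have "(N * real (degree adj u) - lam) * (w $ (k,u) - w $ (l,u)) = 0"
        using we[where k=k and v=u] we[where k=l and v=u] by (simp add: algebra_simps)
      thus ?thesis using \<open>N * real (degree adj u) - lam \<noteq> 0\<close> by simp
    qed
    hence "(\<Sum>m\<in>UNIV. w $ (m, u)) = (\<Sum>m::'n\<in>UNIV. w $ (l, u))" by (intro sum.cong) auto
    thus ?thesis unfolding S_def N_def by simp
  qed
  have "(evec (l,u) - ?p) \<bullet> w = (\<Sum>k\<in>UNIV. \<Sum>v\<in>UNIV. (evec (l,u) - ?p) $ (k,v) * w $ (k,v))"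
    by (simp add: inner_vec_def sum_prod_UNIV)
  also have "\<dots> = (\<Sum>k\<in>UNIV. \<Sum>v\<in>UNIV. (if (k,v) = (l,u) then w $ (k,v) else 0)
        - a $ v / N * w $ (k,v) - (if c \<and> v = u then ((if k = l then 1 else 0) - 1 / N) * w $ (k,v) else 0))"
    by (intro sum.cong refl) (auto simp: evec_def axis_def algebra_simps)
  also have "\<dots> = w $ (l,u) - (\<Sum>v\<in>UNIV. a $ v * S $ v) / N - (if c then w $ (l,u) - S $ u / N else 0)"
  proof -
    have T1: "(\<Sum>k\<in>UNIV. \<Sum>v\<in>UNIV. (if (k,v) = (l,u) then w $ (k,v) else 0)) = w $ (l,u)"
    proof -
      have "\<And>k. (\<Sum>v\<in>UNIV. (if (k,v) = (l,u) then w $ (k,v) else 0)) = (if k = l then w $ (l,u) else 0)"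
        by (case_tac "k = l") auto
      thus ?thesis by simp
    qed
    have T2: "(\<Sum>k\<in>UNIV. \<Sum>v\<in>UNIV. a $ v / N * w $ (k,v)) = (\<Sum>v\<in>UNIV. a $ v * S $ v) / N"
      by (subst sum.swap) (simp add: S_def sum_distrib_left sum_divide_distrib)
    have T3: "(\<Sum>k\<in>UNIV. \<Sum>v\<in>UNIV. (if c \<and> v = u then ((if k = l then 1 else 0) - 1 / N) * w $ (k,v) else 0))
        = (if c then w $ (l,u) - S $ u / N else 0)"
    proof (cases c)
      case True
      have "(\<Sum>k\<in>UNIV. \<Sum>v\<in>UNIV. (if c \<and> v = u then ((if k = l then 1 else 0) - 1 / N) * w $ (k,v) else 0))
          = (\<Sum>k\<in>UNIV. ((if k = l then 1 else 0) - 1 / N) * w $ (k,u))"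
        using True by (simp add: sum.delta' if_distrib cong: if_cong)
      also have "\<dots> = w $ (l,u) - S $ u / N"
        by (simp add: left_diff_distrib sum_subtractf if_distrib[of "\<lambda>x. x * _"] sum.delta S_def sum_divide_distrib cong: if_cong)
      finally show ?thesis using True by simp
    qed simp
    show ?thesis
      by (simp only: sum_subtractf T1 T2 T3)
  qed
  also have "\<dots> = 0"
    using nc Npos Su by (cases c) (auto simp: field_simps)
  finally show "(evec (l,u) - ?p) \<bullet> w = 0" .
qed

lemma two_cases: "(k::2) = 0 \<or> k = 1"
  using exhaust_2[of k] by auto

lemma eproj_blowup_diff:
  fixes m :: "'n::finite" and v :: "'a::finite" and adj :: "'a \<Rightarrow> 'a \<Rightarrow> bool" and lam :: real
  shows "eproj (laplacian (blowup adj)) lam (evec (m,v)) $ (k,w) - eproj (laplacian (blowup adj)) lam (evec (m,v)) $ (k',w)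
    = (if real CARD('n) * real (degree adj v) = lam \<and> w = v then (if k = m then 1 else 0) - (if k' = m then 1 else 0) else 0)"
  by (simp add: eproj_blowup)

lemma key:
  fixes l m :: "'n::finite" and u v :: "'a::finite" and adj :: "'a \<Rightarrow> 'a \<Rightarrow> bool"
  assumes card: "CARD('n) \<ge> 2"
    and sc: "strongly_cospectral (laplacian (blowup adj)) (l,u) (m,v)"
  shows "v = u \<and> (\<forall>k'. k' \<noteq> l \<longrightarrow> l = m \<or> k' = m)"
proof -
  define lam where "lam = real CARD('n) * real (degree adj u)"
  define M where "M = (laplacian (blowup adj) :: real^('n\<times>'a)^('n\<times>'a))"
  have "card (UNIV - {l}) \<ge> 1" using card by (simp add: card_Diff_singleton)
  then obtain k0 where k0: "k0 \<noteq> l" by (metis One_nat_def card.empty DiffE insertCI le_zero_eq not_one_le_zero subsetI subset_empty Diff_eq_empty_iff)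
  have dx: "eproj M lam (evec (l,u)) $ (l,u) - eproj M lam (evec (l,u)) $ (k',u) = 1" if "k' \<noteq> l" for k'
    using eproj_blowup_diff[of adj lam l u l u k'] that unfolding M_def lam_def by simp
  have "eproj M lam (evec (l,u)) \<noteq> 0" using dx[OF k0] by auto
  hence "lam \<in> eig_support M (l,u)" by (simp add: eig_support_alt)
  hence pm: "eproj M lam (evec (l,u)) = eproj M lam (evec (m,v)) \<or> eproj M lam (evec (l,u)) = - eproj M lam (evec (m,v))"
    using sc unfolding strongly_cospectral_def M_def by blast
  have dy: "eproj M lam (evec (m,v)) $ (l,u) - eproj M lam (evec (m,v)) $ (k',u) = 1
         \<or> eproj M lam (evec (m,v)) $ (l,u) - eproj M lam (evec (m,v)) $ (k',u) = -1" if "k' \<noteq> l" for k'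
    using pm dx[OF that] by (auto simp: algebra_simps)
  have "v = u" using dy[OF k0] eproj_blowup_diff[of adj lam m v l u k0] unfolding M_def by (auto split: if_splits)
  moreover have "l = m \<or> k' = m" if "k' \<noteq> l" for k'
    using dy[OF that] eproj_blowup_diff[of adj lam m v l u k'] unfolding M_def by (auto split: if_splits)
  ultimately show ?thesis by blast
qed

lemma part1:
  fixes x y :: "'n::finite \<times> 'a::finite" and adj :: "'a \<Rightarrow> 'a \<Rightarrow> bool"
  assumes card: "CARD('n) \<ge> 3" and xy: "x \<noteq> y"
  shows "\<not> strongly_cospectral (laplacian (blowup adj)) x y"
proof
  assume sc: "strongly_cospectral (laplacian (blowup adj)) x y"
  obtain l u m v where x: "x = (l,u)" and y: "y = (m,v)" by (cases x, cases y) auto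
  have k: "v = u \<and> (\<forall>k'. k' \<noteq> l \<longrightarrow> l = m \<or> k' = m)"
    using key[where l=l and u=u and m=m and v=v and adj=adj] card sc x y by auto
  hence lm: "l \<noteq> m" using xy x y by auto
  have "card (UNIV - {l,m}) \<ge> 1" using card lm by (simp add: card_Diff_subset)
  then obtain k0 where "k0 \<notin> {l,m}"
    by (metis Diff_eq_empty_iff card.empty not_one_le_zero subsetI)
  thus False using k lm by auto
qed

lemma eproj_blowup2:
  fixes adj :: "'a::finite \<Rightarrow> 'a \<Rightarrow> bool" and u :: 'a and lam :: real
  defines "A \<equiv> eproj (laplacian adj) (lam / 2) (evec u)"
  defines "Q \<equiv> (\<chi> i::(2\<times>'a). A $ snd i / 2)"
  defines "r \<equiv> (\<chi> i::(2\<times>'a). if snd i = u then (if fst i = 0 then 1/2 else - 1/2) else 0)"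
  defines "c \<equiv> (2 * real (degree adj u) = lam)"
  shows "eproj (laplacian (blowup adj)) lam (evec ((0::2),u)) = Q + (if c then r else 0)"
    and "eproj (laplacian (blowup adj)) lam (evec ((1::2),u)) = Q - (if c then r else 0)"
  unfolding vec_eq_iff
  by (auto simp: eproj_blowup A_def Q_def r_def c_def) (metis two_cases zero_neq_one)+

lemma grp_aux2: "((a::'b::ab_group_add) + x = - (a - x)) \<longleftrightarrow> a + a = 0"
proof -
  have e: "- (a - x) = x + (- a)" by simp
  have "(a + x = x + (- a)) \<longleftrightarrow> a = - a" by (simp only: add.commute[of a x] add_left_cancel)
  also have "\<dots> \<longleftrightarrow> a + a = 0" by (simp add: eq_neg_iff_add_eq_0)
  finally show ?thesis using e by simp
qed
lemma grp_aux: "((a::'b::ab_group_add) + x = a - x) \<longleftrightarrow> x + x = 0"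
proof -
  have "(a + x = a - x) \<longleftrightarrow> x = - x" by (simp only: diff_conv_add_uminus add_left_cancel)
  also have "\<dots> \<longleftrightarrow> x + x = 0" by (simp add: eq_neg_iff_add_eq_0)
  finally show ?thesis .
qed

lemma part2:
  fixes adj :: "'a::finite \<Rightarrow> 'a \<Rightarrow> bool" and u :: 'a
  defines "M \<equiv> laplacian (blowup adj :: 2 \<times> 'a \<Rightarrow> _)"
  shows "(strongly_cospectral M (0, u) (1, u) \<longleftrightarrow> real (degree adj u) \<notin> eig_support (laplacian adj) u)
     \<and> (strongly_cospectral M (0, u) (1, u) \<longrightarrow>
          sigma_plus M (0, u) (1, u) = (\<lambda>s. 2 * s) ` eig_support (laplacian adj) u
        \<and> sigma_minus M (0, u) (1, u) = {2 * real (degree adj u)})"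
proof -
  define A where "A lam = eproj (laplacian adj) (lam / 2) (evec u)" for lam
  define Q where "Q lam = (\<chi> i::(2\<times>'a). A lam $ snd i / 2)" for lam
  define r where "r = (\<chi> i::(2\<times>'a). if snd i = u then (if fst i = 0 then 1/2 else - 1/2) else (0::real))"
  define c where "c lam = (2 * real (degree adj u) = lam)" for lam
  have px: "eproj M lam (evec (0,u)) = Q lam + (if c lam then r else 0)" for lam
    unfolding M_def A_def Q_def r_def c_def by (rule eproj_blowup2(1))
  have py: "eproj M lam (evec (1,u)) = Q lam - (if c lam then r else 0)" for lam
    unfolding M_def A_def Q_def r_def c_def by (rule eproj_blowup2(2))
  have r0: "r \<noteq> 0" proof assume "r = 0" hence "r $ (0,u) = 0" by simp thus False by (simp add: r_def) qed
  have Qr: "Q lam + r \<noteq> 0" for lam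
  proof
    assume "Q lam + r = 0"
    hence "(Q lam + r) $ (0,u) - (Q lam + r) $ (1,u) = 0" by simp
    thus False by (simp add: r_def Q_def)
  qed
  have QA: "Q lam = 0 \<longleftrightarrow> A lam = 0" for lam
  proof
    assume "Q lam = 0"
    hence "\<forall>v. Q lam $ (0,v) = 0" by simp
    thus "A lam = 0" by (simp add: Q_def vec_eq_iff)
  qed (simp add: Q_def vec_eq_iff)
  have eqp: "eproj M lam (evec (0,u)) = eproj M lam (evec (1,u)) \<longleftrightarrow> \<not> c lam" for lam
  proof -
    have "eproj M lam (evec (0,u)) = eproj M lam (evec (1,u)) \<longleftrightarrow> (if c lam then r else 0) + (if c lam then r else 0) = 0"
      unfolding px py by (rule grp_aux)
    also have "\<dots> \<longleftrightarrow> \<not> c lam"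
    proof (cases "c lam")
      case True
      have "r + r \<noteq> 0"
      proof
        assume "r + r = 0" hence "(r + r) $ (0,u) = 0" by simp
        thus False by (simp add: r_def)
      qed
      thus ?thesis using True by simp
    qed simp
    finally show ?thesis .
  qed
  have eqm: "eproj M lam (evec (0,u)) = - eproj M lam (evec (1,u)) \<longleftrightarrow> A lam = 0" for lam
  proof -
    have "eproj M lam (evec (0,u)) = - eproj M lam (evec (1,u)) \<longleftrightarrow> Q lam + Q lam = 0"
      unfolding px py by (rule grp_aux2)
    also have "\<dots> \<longleftrightarrow> Q lam = 0" by (simp add: vec_eq_iff)
    finally show ?thesis using QA by simp
  qed
  have nz: "eproj M lam (evec (0,u)) \<noteq> 0 \<longleftrightarrow> (if c lam then True else A lam \<noteq> 0)" for lam
    using Qr QA by (auto simp: px)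
  have cd: "c (2 * real (degree adj u))" by (simp add: c_def)
  have Ad: "A (2 * real (degree adj u)) = eproj (laplacian adj) (real (degree adj u)) (evec u)"
    by (simp add: A_def)
  have SC: "strongly_cospectral M (0, u) (1, u) \<longleftrightarrow> A (2 * real (degree adj u)) = 0"
  proof
    assume "strongly_cospectral M (0, u) (1, u)"
    moreover have "2 * real (degree adj u) \<in> eig_support M (0,u)"
      using nz[of "2 * real (degree adj u)"] cd by (simp add: eig_support_alt)
    ultimately show "A (2 * real (degree adj u)) = 0"
      unfolding strongly_cospectral_def using eqp eqm cd by blast
  next
    assume h: "A (2 * real (degree adj u)) = 0"
    show "strongly_cospectral M (0, u) (1, u)"
      unfolding strongly_cospectral_def
    proof
      fix lam assume "lam \<in> eig_support M (0,u)"
      show "eproj M lam (evec (0,u)) = eproj M lam (evec (1,u)) \<or> eproj M lam (evec (0,u)) = - eproj M lam (evec (1,u))"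
      proof (cases "c lam")
        case True
        hence "lam = 2 * real (degree adj u)" by (simp add: c_def)
        thus ?thesis using eqm h by simp
      next
        case False thus ?thesis using eqp by simp
      qed
    qed
  qed
  have part_a: "strongly_cospectral M (0, u) (1, u) \<longleftrightarrow> real (degree adj u) \<notin> eig_support (laplacian adj) u"
    using SC Ad by (simp add: eig_support_alt)
  have part_b: "sigma_plus M (0, u) (1, u) = (\<lambda>s. 2 * s) ` eig_support (laplacian adj) u
        \<and> sigma_minus M (0, u) (1, u) = {2 * real (degree adj u)}" if sc: "strongly_cospectral M (0, u) (1, u)"
  proof
    have h: "A (2 * real (degree adj u)) = 0" using SC sc by simp
    have "sigma_plus M (0, u) (1, u) = {lam. A lam \<noteq> 0}"
      unfolding sigma_plus_alt eqp nz using h by (auto simp: c_def)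
    also have "\<dots> = (\<lambda>s. 2 * s) ` eig_support (laplacian adj) u"
    proof (rule set_eqI)
      fix lam
      have "lam \<in> (\<lambda>s. 2 * s) ` eig_support (laplacian adj) u \<longleftrightarrow> lam / 2 \<in> eig_support (laplacian adj) u"
      proof
        assume "lam / 2 \<in> eig_support (laplacian adj) u"
        moreover have "lam = 2 * (lam / 2)" by simp
        ultimately show "lam \<in> (\<lambda>s. 2 * s) ` eig_support (laplacian adj) u" by (rule image_eqI[rotated])
      qed auto
      thus "lam \<in> {lam. A lam \<noteq> 0} \<longleftrightarrow> lam \<in> (\<lambda>s. 2 * s) ` eig_support (laplacian adj) u"
        unfolding eig_support_alt A_def by simp
    qed
    finally show "sigma_plus M (0, u) (1, u) = (\<lambda>s. 2 * s) ` eig_support (laplacian adj) u" .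
    show "sigma_minus M (0, u) (1, u) = {2 * real (degree adj u)}"
      unfolding sigma_minus_alt eqm nz using h by (auto simp: c_def)
  qed
  show ?thesis using part_a part_b by blast
qed

theorem theorem2:
  fixes adj :: "'a::finite \<Rightarrow> 'a \<Rightarrow> bool"
  assumes "simple_graph adj"
  shows "(CARD('n::finite) \<ge> 3 \<longrightarrow>
            (\<forall>x y :: 'n \<times> 'a. x \<noteq> y \<longrightarrow>
               \<not> strongly_cospectral (laplacian (blowup adj)) x y))
       \<and> (\<forall>u. (strongly_cospectral (laplacian (blowup adj :: 2 \<times> 'a \<Rightarrow> _)) (0, u) (1, u)
                \<longleftrightarrow> real (degree adj u) \<notin> eig_support (laplacian adj) u)
           \<and> (strongly_cospectral (laplacian (blowup adj :: 2 \<times> 'a \<Rightarrow> _)) (0, u) (1, u) \<longrightarrow>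
                sigma_plus (laplacian (blowup adj :: 2 \<times> 'a \<Rightarrow> _)) (0, u) (1, u)
                  = (\<lambda>s. 2 * s) ` eig_support (laplacian adj) u
              \<and> sigma_minus (laplacian (blowup adj :: 2 \<times> 'a \<Rightarrow> _)) (0, u) (1, u)
                  = {2 * real (degree adj u)})
           \<and> (\<forall>z. strongly_cospectral (laplacian (blowup adj :: 2 \<times> 'a \<Rightarrow> _)) (0, u) z
                  \<longrightarrow> z \<noteq> (0, u) \<longrightarrow> z = (1, u)))"
proof -
  have P3: "z = (1, u)" if sc: "strongly_cospectral (laplacian (blowup adj :: 2 \<times> 'a \<Rightarrow> _)) (0, u) z"
    and nz: "z \<noteq> (0, u)" for u z
  proof -
    obtain m v where z: "z = (m, v)" by (cases z) auto
    have "v = u \<and> (\<forall>k'. k' \<noteq> (0::2) \<longrightarrow> 0 = m \<or> k' = m)"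
      using key[where l="0::2" and u=u and m=m and v=v and adj=adj] sc z by simp
    thus ?thesis using nz z two_cases[of m] by auto
  qed
  show ?thesis
  proof (intro conjI allI impI)
    fix x y :: "'n \<times> 'a"
    assume "3 \<le> CARD('n)" "x \<noteq> y"
    thus "\<not> strongly_cospectral (laplacian (blowup adj)) x y" by (rule part1)
  next
    fix u
    note p2 = part2[where adj=adj and u=u]
    show "strongly_cospectral (laplacian (blowup adj :: 2 \<times> 'a \<Rightarrow> _)) (0, u) (1, u)
                \<longleftrightarrow> real (degree adj u) \<notin> eig_support (laplacian adj) u"
      using p2 by (rule conjunct1)
    {
      assume h: "strongly_cospectral (laplacian (blowup adj :: 2 \<times> 'a \<Rightarrow> _)) (0, u) (1, u)"
      have q: "sigma_plus (laplacian (blowup adj :: 2 \<times> 'a \<Rightarrow> _)) (0, u) (1, u)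
                  = (\<lambda>s. 2 * s) ` eig_support (laplacian adj) u
              \<and> sigma_minus (laplacian (blowup adj :: 2 \<times> 'a \<Rightarrow> _)) (0, u) (1, u)
                  = {2 * real (degree adj u)}"
        using p2[THEN conjunct2] h by (rule mp)
      show "sigma_plus (laplacian (blowup adj :: 2 \<times> 'a \<Rightarrow> _)) (0, u) (1, u)
                  = (\<lambda>s. 2 * s) ` eig_support (laplacian adj) u" using q by (rule conjunct1)
      show "sigma_minus (laplacian (blowup adj :: 2 \<times> 'a \<Rightarrow> _)) (0, u) (1, u)
                  = {2 * real (degree adj u)}" using q by (rule conjunct2)
    }
  next
    fix u z
    assume "strongly_cospectral (laplacian (blowup adj :: 2 \<times> 'a \<Rightarrow> _)) (0, u) z" "z \<noteq> (0, u)"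
    thus "z = (1, u)" by (rule P3)
  qed
qed

end
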